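(* For every integer $N\ge1$ there exists a function $\mathrm{Col}:\mathbb Z^+\times\mathrm{Chain}(N)\to\mathbb Z^+$ such that for every integer $k\ge0$ with $\log^{(k)}N\ge1$: (1) if $\mathcal A$ is a chain with $\mathrm{lgt}(\mathcal A)\ge 2k$, then for every $s\ge\mathrm{sz}(\mathcal A_{2k})$, $\mathrm{Col}(s,\mathcal A_{2k})\le 2^{6(s+1)}\log^{(k)}N$; (2) if $\mathcal A=\langle A_0,\dots\rangle$ and $\mathcal A'=\langle A'_0,\dots\rangle$ are chains of the same length, with that length at least $2k$, with $\mathrm{sz}(\mathcal A),\mathrm{sz}(\mathcal A')\le s$, $S^1(\mathcal A)\cap S^1(\mathcal A')\ne\emptyset$ and $A_0\ne A'_0$, then $\mathrm{Col}(s,\mathcal A_{2k})\ne\mathrm{Col}(s,\mathcal A'_{2k})$.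
   Context: A chain in $[N]=\{1,\dots,N\}$ is a finite sequence $\mathcal A=\langle A_0,\dots,A_k\rangle$ of subsets of $[N]$ with $|A_0|=1$ and $A_i\subseteq A_{i+1}$ for all $i$; if $A_0=\{w\}$, $w$ is the leader. $\mathrm{Chain}(N)$ is the set of all chains in $[N]$. The length is $\mathrm{lgt}(\mathcal A)=k$ and the size is $\mathrm{sz}(\mathcal A)=|A_k|$. For $i\le\mathrm{lgt}(\mathcal A)$, the prefix is $\mathcal A_i=\langle A_0,\dots,A_i\rangle$. For a chain $\mathcal A=\langle A_0,\dots,A_k\rangle$ and integer $d\ge0$, a chain $\mathcal B=\langle B_0,\dots,B_{k-d}\rangle$ is within distance $d$ of $\mathcal A$ if $A_{i-d}\subseteq B_i\subseteq A_{i+d}$ for all $i\in\{0,\dots,k-d\}$ (sets with negative index are the empty set); $S^d(\mathcal A)$ is the set of all chains within distance $d$ of $\mathcal A$. $\log^{(i)}$ is the $i$-fold iterated base-2 logarithm, $\log^{(0)}N=N$. *)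

theory Defs
  imports Complex_Main
begin

definition Chain :: "nat \<Rightarrow> nat set list set" where
  "Chain N = {A. A \<noteq> [] \<and> card (A ! 0) = 1 \<and> (\<forall>i<length A. A ! i \<subseteq> {1..N})
               \<and> (\<forall>i. Suc i < length A \<longrightarrow> A ! i \<subseteq> A ! Suc i)}"

definition lgt :: "nat set list \<Rightarrow> nat" where
  "lgt A = length A - 1"

definition sz :: "nat set list \<Rightarrow> nat" where
  "sz A = card (last A)"

definition prefix :: "nat set list \<Rightarrow> nat \<Rightarrow> nat set list" where
  "prefix A i = take (Suc i) A"

text \<open>B is within distance d of A (sets with negative index are empty).\<close>
definition within_dist :: "nat \<Rightarrow> nat set list \<Rightarrow> nat set list \<Rightarrow> bool" where
  "within_dist d A B \<longleftrightarrow> lgt B + d = lgt A \<and>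
     (\<forall>i\<le>lgt B. (if d \<le> i then A ! (i - d) else {}) \<subseteq> B ! i \<and> B ! i \<subseteq> A ! (i + d))"

definition S :: "nat \<Rightarrow> nat \<Rightarrow> nat set list \<Rightarrow> nat set list set" where
  "S N d A = {B \<in> Chain N. within_dist d A B}"

definition iter_log :: "nat \<Rightarrow> real \<Rightarrow> real" where
  "iter_log k x = ((\<lambda>y. log 2 y) ^^ k) x"

end

theory Submission
  imports Defs "HOL-Library.FuncSet"
begin


definition good_fam :: "nat \<Rightarrow> nat \<Rightarrow> nat \<Rightarrow> (nat \<Rightarrow> nat set) \<Rightarrow> bool" where
  "good_fam c D m F \<longleftrightarrow> (\<forall>u. F u \<subseteq> {1..m}) \<and>
     (\<forall>u\<in>{1..c}. \<forall>X. X \<subseteq> {1..c} \<longrightarrow> card X \<le> D \<longrightarrow> u \<notin> X \<longrightarrow> \<not> F u \<subseteq> \<Union>(F ` X))"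

lemma pow_ratio_le3:
  fixes D a :: nat
  assumes "a \<le> D"
  shows "real (D+1) ^ a \<le> 3 * real D ^ a"
proof (cases "D = 0")
  case True then show ?thesis using assms by simp
next
  case False
  then have Dp: "real D > 0" by simp
  have "real (D+1) ^ a = real D ^ a * (1 + 1 / real D) ^ a"
    using Dp by (simp add: power_mult_distrib[symmetric] field_simps)
  also have "(1 + 1 / real D) ^ a \<le> (1 + 1 / real D) ^ D"
    using assms Dp by (intro power_increasing) auto
  also have "(1 + 1 / real D) ^ D \<le> exp (1 / real D) ^ D"
    using Dp by (intro power_mono) (auto simp: add.commute)
  also have "\<dots> = exp 1" using Dp by (simp add: exp_of_nat_mult[symmetric])
  finally have "real (D+1) ^ a \<le> real D ^ a * exp 1"
    using Dp by (simp add: mult_left_mono)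
  also have "\<dots> \<le> real D ^ a * 3" using exp_le Dp by (intro mult_left_mono) auto
  finally show ?thesis by simp
qed

lemma card_G:
  fixes c D u :: nat
  assumes u: "u \<in> {1..c}" and X: "X \<subseteq> {1..c}" "u \<notin> X" "card X \<le> D"
  shows "real (card (PiE {1..c} (\<lambda>_. {0..D}))) \<le>
     3 * real (D+1) * real (card {g\<in>PiE {1..c} (\<lambda>_. {0..D}). g u = 0 \<and> (\<forall>y\<in>X. g y \<noteq> 0)})"
proof -
  define T where "T = (\<lambda>i. if i = u then {0} else if i \<in> X then {1..D} else {0..D::nat})"
  define R where "R = {1..c} - insert u X"
  have G: "{g\<in>PiE {1..c} (\<lambda>_. {0..D}). g u = 0 \<and> (\<forall>y\<in>X. g y \<noteq> 0)} = PiE {1..c} T"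
    using u X unfolding T_def by (fastforce simp: PiE_iff split: if_splits)
  have spl: "{1..c} = insert u (X \<union> R)" using u X unfolding R_def by auto
  have fX: "finite X" using X finite_subset by blast
  have fR: "finite R" unfolding R_def by simp
  have dj: "u \<notin> X \<union> R" "X \<inter> R = {}" using X unfolding R_def by auto
  have prod_split: "(\<Prod>i\<in>{1..c}. f i) = f u * ((\<Prod>i\<in>X. f i) * (\<Prod>i\<in>R. f i))" for f :: "nat \<Rightarrow> nat"
    unfolding spl using fX fR dj by (simp add: prod.union_disjoint)
  have cU: "card (PiE {1..c} (\<lambda>_. {0..D})) = (D+1) * ((D+1) ^ card X * (D+1) ^ card R)"
    unfolding card_PiE[OF finite_atLeastAtMost] prod_split by simp
  have "card (PiE {1..c} T) = (\<Prod>i\<in>{1..c}. card (T i))" by (simp add: card_PiE)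
  also have "\<dots> = 1 * ((\<Prod>i\<in>X. D) * (\<Prod>i\<in>R. D+1))"
    unfolding prod_split
    by (rule arg_cong2[where f="(*)"], simp add: T_def,
        rule arg_cong2[where f="(*)"]; rule prod.cong; use dj in \<open>auto simp: T_def\<close>)
  also have "\<dots> = D ^ card X * (D+1) ^ card R" by simp
  finally have cG: "card (PiE {1..c} T) = D ^ card X * (D+1) ^ card R" .
  have "real (D+1) ^ card X \<le> 3 * real D ^ card X" using pow_ratio_le3 X(3) by blast
  then have "real (D+1) * (real (D+1) ^ card X * real (D+1) ^ card R) \<le>
        real (D+1) * (3 * real D ^ card X * real (D+1) ^ card R)"
    by (intro mult_left_mono mult_right_mono) auto
  then show ?thesis unfolding G cU cG by (simp add: algebra_simps)
qed

lemma card_small_sets: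
  "card {X. X \<subseteq> {1..c::nat} \<and> card X \<le> D} \<le> (c+1)^D"
proof -
  have "{X. X \<subseteq> {1..c::nat} \<and> card X \<le> D} \<subseteq> (\<lambda>xs. set xs - {0}) ` {xs. set xs \<subseteq> {0..c} \<and> length xs = D}"
  proof
    fix X assume X: "X \<in> {X. X \<subseteq> {1..c::nat} \<and> card X \<le> D}"
    then have fX: "finite X" using finite_subset by auto
    define xs where "xs = sorted_list_of_set X @ replicate (D - card X) 0"
    have "set xs \<subseteq> X \<union> {0}" unfolding xs_def using fX by auto
    moreover have "X \<subseteq> set xs" unfolding xs_def using fX by auto
    ultimately have "set xs - {0} = X" using X by auto
    moreover have "set xs \<subseteq> {0..c}" using \<open>set xs \<subseteq> X \<union> {0}\<close> X by (auto simp: subset_iff)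
    moreover have "length xs = D" unfolding xs_def using X fX by auto
    ultimately show "X \<in> (\<lambda>xs. set xs - {0}) ` {xs. set xs \<subseteq> {0..c} \<and> length xs = D}" by blast
  qed
  then have "card {X. X \<subseteq> {1..c::nat} \<and> card X \<le> D} \<le> card ((\<lambda>xs. set xs - {0}) ` {xs. set xs \<subseteq> {0..c} \<and> length xs = D})"
    by (intro card_mono finite_imageI finite_lists_length_eq) auto
  also have "\<dots> \<le> card {xs. set xs \<subseteq> {0..c} \<and> length xs = D}" by (rule card_image_le) (simp add: finite_lists_length_eq)
  also have "\<dots> = (c+1)^D" by (simp add: card_lists_length_eq)
  finally show ?thesis .
qed

lemma fam_exists:
  assumes c1: "c \<ge> 1" and cn: "c \<le> 2^n"
  shows "\<exists>F. good_fam c D (3*(D+1)^2*(n+2)) F"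
proof (rule ccontr)
  assume nex: "\<not> ?thesis"
  define m where "m = 3*(D+1)^2*(n+2)"
  define U where "U = PiE {1..c} (\<lambda>_. {0..D::nat})"
  define Om where "Om = PiE {1..m} (\<lambda>_. U)"
  define I where "I = {(u,X). u\<in>{1..c} \<and> X \<subseteq> {1..c} \<and> card X \<le> D \<and> u \<notin> X}"
  define B where "B = (\<lambda>(u,X). {g\<in>U. g u = 0 \<longrightarrow> (\<exists>y\<in>X. g y = 0)})"
  define q :: real where "q = 1 / (3 * real (D+1))"
  have cover: "Om \<subseteq> (\<Union>p\<in>I. PiE {1..m} (\<lambda>_. B p))"
  proof
    fix F assume F: "F \<in> Om"
    define SF where "SF = (\<lambda>u. {x\<in>{1..m}. F x u = 0})"
    have "\<not> good_fam c D m SF" using nex m_def by blast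
    moreover have "\<forall>u. SF u \<subseteq> {1..m}" by (auto simp: SF_def)
    ultimately obtain u X where uX: "u \<in> {1..c}" "X \<subseteq> {1..c}" "card X \<le> D" "u \<notin> X" "SF u \<subseteq> \<Union>(SF ` X)"
      unfolding good_fam_def by blast
    have "F x \<in> B (u,X)" if x: "x \<in> {1..m}" for x
    proof -
      have FU: "F x \<in> U" using F x by (auto simp: Om_def)
      have "\<exists>y\<in>X. F x y = 0" if "F x u = 0"
        using uX(5) that x by (auto simp: SF_def)
      then show ?thesis using FU by (auto simp: B_def)
    qed
    then have "F \<in> PiE {1..m} (\<lambda>_. B (u,X))" using F by (auto simp: Om_def PiE_iff)
    then show "F \<in> (\<Union>p\<in>I. PiE {1..m} (\<lambda>_. B p))" using uX by (auto simp: I_def)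
  qed
  have finI: "finite I"
    by (rule finite_subset[of _ "{1..c} \<times> Pow {1..c}"]) (auto simp: I_def)
  have finU: "finite U" unfolding U_def by (simp add: finite_PiE)
  have cardU: "card U = (D+1)^c" unfolding U_def by (simp add: card_PiE)
  have Upos: "card U > 0" using cardU by simp
  have cardB: "real (card (B p)) \<le> (1 - q) * real (card U)" if "p \<in> I" for p
  proof -
    obtain u X where p: "p = (u,X)" by (cases p)
    have uX: "u \<in> {1..c}" "X \<subseteq> {1..c}" "card X \<le> D" "u \<notin> X"
      using that unfolding I_def p by simp_all
    define G where "G = {g\<in>U. g u = 0 \<and> (\<forall>y\<in>X. g y \<noteq> 0)}"
    have BG: "B p = U - G" by (auto simp: B_def p G_def)
    have GU: "G \<subseteq> U" by (auto simp: G_def)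
    have "card (B p) = card U - card G" unfolding BG using GU finU by (simp add: card_Diff_subset finite_subset)
    then have r: "real (card (B p)) = real (card U) - real (card G)"
      using card_mono[OF finU GU] by simp
    have "real (card U) \<le> 3 * real (D+1) * real (card G)"
      using card_G[OF uX(1) uX(2) uX(4) uX(3)] unfolding G_def U_def by simp
    then have "real (card U) * q \<le> real (card G)" unfolding q_def by (simp add: field_simps)
    then show ?thesis unfolding r by (simp add: algebra_simps)
  qed
  have cardI: "card I \<le> c * (c+1)^D"
  proof -
    have "I \<subseteq> {1..c} \<times> {X. X \<subseteq> {1..c::nat} \<and> card X \<le> D}" by (auto simp: I_def)
    then have "card I \<le> card ({1..c} \<times> {X. X \<subseteq> {1..c::nat} \<and> card X \<le> D})"
      by (intro card_mono) auto
    also have "\<dots> = c * card {X. X \<subseteq> {1..c::nat} \<and> card X \<le> D}" by (simp add: card_cartesian_product)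
    also have "\<dots> \<le> c * (c+1)^D" by (intro mult_left_mono card_small_sets) auto
    finally show ?thesis .
  qed
  have "card Om \<le> card (\<Union>p\<in>I. PiE {1..m} (\<lambda>_. B p))"
    using cover finI by (intro card_mono) (auto intro!: finite_PiE simp: B_def finU)
  also have "\<dots> \<le> (\<Sum>p\<in>I. card (PiE {1..m} (\<lambda>_. B p)))" using finI by (rule card_UN_le)
  finally have "card Om \<le> (\<Sum>p\<in>I. card (B p) ^ m)"
    by (simp add: card_PiE)
  then have "real (card Om) \<le> real (\<Sum>p\<in>I. card (B p) ^ m)" by (simp only: of_nat_le_iff)
  also have "\<dots> = (\<Sum>p\<in>I. real (card (B p)) ^ m)" by simp
  also have "\<dots> \<le> (\<Sum>p\<in>I. ((1 - q) * real (card U)) ^ m)"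
    using cardB by (intro sum_mono power_mono) auto
  also have "\<dots> = real (card I) * (1 - q) ^ m * real (card U) ^ m"
    by (simp add: power_mult_distrib)
  finally have ineq: "real (card U) ^ m \<le> real (card I) * (1 - q) ^ m * real (card U) ^ m"
    by (simp add: Om_def card_PiE)
  have q01: "0 \<le> q" "q \<le> 1" unfolding q_def by (auto simp: field_simps)
  have "(1 - q) ^ m \<le> exp (- q) ^ m"
    using q01 exp_ge_add_one_self[of "-q"] by (intro power_mono) auto
  also have "\<dots> = exp (- (q * real m))" by (simp add: exp_of_nat_mult[symmetric] mult.commute)
  also have "q * real m = real ((n+2) * (D+1))" unfolding q_def m_def by (simp add: field_simps power2_eq_square)
  finally have e1: "(1 - q) ^ m \<le> exp (- real ((n+2) * (D+1)))" .
  have "c * (c+1)^D \<le> (2*c) ^ (D+1)"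
  proof -
    have "(c+1)^D \<le> (2*c)^D" using c1 by (intro power_mono) auto
    then show ?thesis using c1 by (simp add: mult_le_mono)
  qed
  also have "\<dots> \<le> (2 * 2^n) ^ (D+1)" using cn by (intro power_mono) auto
  also have "\<dots> = 2 ^ ((n+1)*(D+1))" by (simp add: power_mult[symmetric] power_add[symmetric] mult.commute)
  finally have cI2: "card I \<le> 2 ^ ((n+1)*(D+1))" using cardI by linarith
  have "real (card I) \<le> 2 ^ ((n+1)*(D+1))" using cI2
  proof -
    have "real (card I) \<le> real (2 ^ ((n+1)*(D+1)))" using cI2 by (simp only: of_nat_le_iff)
    then show ?thesis by simp
  qed
  also have "(2::real) ^ ((n+1)*(D+1)) \<le> exp 1 ^ ((n+1)*(D+1))"
    using exp_ge_add_one_self[of 1] by (intro power_mono) auto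
  also have "\<dots> = exp (real ((n+1)*(D+1)))" using exp_of_nat_mult[of "(n+1)*(D+1)" 1] by (simp only: mult_1_right) (rule sym)
  finally have e2: "real (card I) \<le> exp (real ((n+1)*(D+1)))" .
  have "real (card I) * (1 - q) ^ m \<le> exp (real ((n+1)*(D+1))) * exp (- real ((n+2) * (D+1)))"
    using e1 e2 q01 by (intro mult_mono) auto
  also have "\<dots> = exp (- real (D+1))" by (simp add: exp_add[symmetric] algebra_simps)
  also have "\<dots> < 1" by simp
  finally have "real (card I) * (1 - q) ^ m < 1" .
  then have "real (card I) * (1 - q) ^ m * real (card U) ^ m < real (card U) ^ m"
    using Upos by simp
  then show False using ineq by linarith
qed



definition nlog :: "nat \<Rightarrow> nat" where "nlog c = nat \<lceil>log 2 (real c)\<rceil>"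
definition mm :: "nat \<Rightarrow> nat \<Rightarrow> nat" where "mm c D = 3*(D+1)^2*(nlog c + 2)"
definition fam :: "nat \<Rightarrow> nat \<Rightarrow> nat \<Rightarrow> nat set" where
  "fam c D = (SOME F. good_fam c D (mm c D) F)"

lemma nlog_ge: assumes "c \<ge> 1" shows "c \<le> 2 ^ nlog c"
proof -
  have l0: "log 2 (real c) \<ge> 0" using assms by simp
  have "real c = 2 powr log 2 (real c)" using assms by simp
  also have "\<dots> \<le> 2 powr real_of_int \<lceil>log 2 (real c)\<rceil>" by (intro powr_mono) auto
  also have "real_of_int \<lceil>log 2 (real c)\<rceil> = real (nlog c)" unfolding nlog_def using l0 by simp
  also have "2 powr real (nlog c) = 2 ^ nlog c" by (simp add: powr_realpow)
  finally have "real c \<le> real (2 ^ nlog c)" by simp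
  then show ?thesis by (simp only: of_nat_le_iff)
qed

lemma nlog_le: assumes "c \<ge> 1" shows "real (nlog c) \<le> log 2 (real c) + 1"
proof -
  have l0: "log 2 (real c) \<ge> 0" using assms by simp
  then show ?thesis unfolding nlog_def by linarith
qed

lemma fam_good: "c \<ge> 1 \<Longrightarrow> good_fam c D (mm c D) (fam c D)"
proof -
  assume "c \<ge> 1"
  then have "\<exists>F. good_fam c D (mm c D) F" unfolding mm_def by (intro fam_exists nlog_ge) auto
  then show ?thesis unfolding fam_def by (rule someI_ex)
qed

definition lin :: "nat \<Rightarrow> nat \<Rightarrow> nat \<Rightarrow> nat set \<Rightarrow> nat" where
  "lin c D u Cs = (if \<exists>x. x \<in> fam c D u \<and> (\<forall>y\<in>Cs-{u}. x \<notin> fam c D y)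
     then SOME x. x \<in> fam c D u \<and> (\<forall>y\<in>Cs-{u}. x \<notin> fam c D y) else 1)"

lemma lin_range: assumes "c \<ge> 1" shows "lin c D u Cs \<in> {1..mm c D}"
proof (cases "\<exists>x. x \<in> fam c D u \<and> (\<forall>y\<in>Cs-{u}. x \<notin> fam c D y)")
  case True
  then have "(SOME x. x \<in> fam c D u \<and> (\<forall>y\<in>Cs-{u}. x \<notin> fam c D y)) \<in> fam c D u"
    using someI_ex[OF True] by blast
  moreover have "fam c D u \<subseteq> {1..mm c D}" using fam_good[OF assms, of D] unfolding good_fam_def by blast
  ultimately show ?thesis using True unfolding lin_def by auto
next
  case False
  have "1 \<le> mm c D" unfolding mm_def by (simp add: Suc_le_eq)
  moreover have "lin c D u Cs = 1" unfolding lin_def by (rule if_not_P[OF False])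
  ultimately show ?thesis by simp
qed

lemma lin_ex:
  assumes "c \<ge> 1" "u \<in> {1..c}" "Cs \<subseteq> {1..c}" "card Cs \<le> D" "finite Cs"
  shows "\<exists>x. x \<in> fam c D u \<and> (\<forall>y\<in>Cs-{u}. x \<notin> fam c D y)"
proof -
  have "card (Cs - {u}) \<le> D" using assms by (meson card_Diff1_le le_trans card_Diff_subset)
  then have "\<not> fam c D u \<subseteq> \<Union>(fam c D ` (Cs - {u}))"
    using fam_good[OF assms(1), of D] assms unfolding good_fam_def by blast
  then show ?thesis by blast
qed

lemma lin_distinct:
  assumes "c \<ge> 1" "u \<in> {1..c}" "Cs \<subseteq> {1..c}" "card Cs \<le> D" "finite Cs"
    "u' \<in> {1..c}" "Cs' \<subseteq> {1..c}" "card Cs' \<le> D" "finite Cs'"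
    "u \<noteq> u'" "u' \<in> Cs"
  shows "lin c D u Cs \<noteq> lin c D u' Cs'"
proof -
  let ?P = "\<lambda>x. x \<in> fam c D u \<and> (\<forall>y\<in>Cs-{u}. x \<notin> fam c D y)"
  let ?P' = "\<lambda>x. x \<in> fam c D u' \<and> (\<forall>y\<in>Cs'-{u'}. x \<notin> fam c D y)"
  have e: "\<exists>x. ?P x" by (rule lin_ex[OF assms(1-5)])
  have e': "\<exists>x. ?P' x" by (rule lin_ex[OF assms(1) assms(6-9)])
  have l: "lin c D u Cs = (SOME x. ?P x)" using e unfolding lin_def by simp
  have l': "lin c D u' Cs' = (SOME x. ?P' x)" using e' unfolding lin_def by simp
  have p: "?P (SOME x. ?P x)" using e by (rule someI_ex)
  have p': "?P' (SOME x. ?P' x)" using e' by (rule someI_ex)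
  show ?thesis unfolding l l' using p p' assms(10,11) by auto
qed

definition cand :: "nat \<Rightarrow> nat set list \<Rightarrow> nat set list set" where
  "cand j L = {M. length M = Suc j \<and>
     (\<forall>i\<le>j. (if i = 0 then {} else L!(i-1)) \<subseteq> M!i \<and> M!i \<subseteq> L!(Suc i))}"

lemma Fr_card:
  assumes nest: "\<forall>a b. a \<le> b \<longrightarrow> b \<le> Suc j \<longrightarrow> L!a \<subseteq> L!b"
  shows "card {i. i \<le> j \<and> x \<in> L!(Suc i) \<and> \<not>(i \<noteq> 0 \<and> x \<in> L!(i-1))} \<le> 2"
    (is "card ?F \<le> 2")
proof (cases "?F = {}")
  case True then show ?thesis by (simp only: card.empty)
next
  case False
  have fF: "finite ?F" by (rule finite_subset[of _ "{..j}"]) auto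
  define i0 where "i0 = Min ?F"
  have i0F: "i0 \<in> ?F" unfolding i0_def using fF False by (rule Min_in)
  have "?F \<subseteq> {i0, Suc i0}"
  proof
    fix i assume iF: "i \<in> ?F"
    have "i0 \<le> i" unfolding i0_def using fF iF by simp
    show "i \<in> {i0, Suc i0}"
    proof (rule ccontr)
      assume "i \<notin> {i0, Suc i0}"
      then have "Suc i0 \<le> i - 1" using \<open>i0 \<le> i\<close> by auto
      moreover have "i - 1 \<le> Suc j" using iF by auto
      ultimately have "L!(Suc i0) \<subseteq> L!(i-1)" using nest by blast
      then show False using i0F iF \<open>Suc i0 \<le> i - 1\<close> by auto
    qed
  qed
  then have "card ?F \<le> card {i0, Suc i0}" by (intro card_mono) auto
  then show ?thesis by simp
qed

lemma cand_count:
  assumes nest: "\<forall>a b. a \<le> b \<longrightarrow> b \<le> Suc j \<longrightarrow> L!a \<subseteq> L!b" and fin: "finite (L!Suc j)"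
  shows "finite (cand j L) \<and> card (cand j L) \<le> 4 ^ card (L ! Suc j)"
proof -
  define X where "X = L ! Suc j"
  define Fr where "Fr = (\<lambda>x. {i. i \<le> j \<and> x \<in> L!(Suc i) \<and> \<not>(i \<noteq> 0 \<and> x \<in> L!(i-1))})"
  define phi where "phi = (\<lambda>M. restrict (\<lambda>x. {i \<in> Fr x. x \<in> M!i}) X)"
  have sub: "phi ` cand j L \<subseteq> PiE X (\<lambda>x. Pow (Fr x))" unfolding phi_def by auto
  have inX: "M!i \<subseteq> X" if "M \<in> cand j L" "i \<le> j" for M i
  proof -
    have "M!i \<subseteq> L!Suc i" using that unfolding cand_def by auto
    also have "\<dots> \<subseteq> X" unfolding X_def using nest that(2) by auto
    finally show ?thesis .
  qed
  have inj: "inj_on phi (cand j L)"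
  proof (rule inj_onI)
    fix M1 M2 assume M1: "M1 \<in> cand j L" and M2: "M2 \<in> cand j L" and eq: "phi M1 = phi M2"
    have len: "length M1 = Suc j" "length M2 = Suc j" using M1 M2 unfolding cand_def by auto
    show "M1 = M2"
    proof (rule nth_equalityI)
      show "length M1 = length M2" using len by simp
      fix i assume "i < length M1"
      then have ij: "i \<le> j" using len by simp
      show "M1 ! i = M2 ! i"
      proof (rule set_eqI)
        fix y
        show "y \<in> M1!i \<longleftrightarrow> y \<in> M2!i"
        proof (cases "y \<in> X")
          case False then show ?thesis using inX[OF M1 ij] inX[OF M2 ij] by auto
        next
          case yX: True
          have s1: "(if i = 0 then {} else L!(i-1)) \<subseteq> M1!i \<and> M1!i \<subseteq> L!(Suc i)"
            using M1 ij unfolding cand_def by auto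
          have s2: "(if i = 0 then {} else L!(i-1)) \<subseteq> M2!i \<and> M2!i \<subseteq> L!(Suc i)"
            using M2 ij unfolding cand_def by auto
          show ?thesis
          proof (cases "i \<noteq> 0 \<and> y \<in> L!(i-1)")
            case True then show ?thesis using s1 s2 by auto
          next
            case nf: False
            show ?thesis
            proof (cases "y \<in> L!(Suc i)")
              case False then show ?thesis using s1 s2 by auto
            next
              case True
              then have iF: "i \<in> Fr y" unfolding Fr_def using nf ij by auto
              have "phi M1 y = phi M2 y" using eq by simp
              then have "{i \<in> Fr y. y \<in> M1!i} = {i \<in> Fr y. y \<in> M2!i}" unfolding phi_def using yX by simp
              then show ?thesis using iF by blast
            qed
          qed
        qed
      qed
    qed
  qed
  have finF: "finite (Fr x)" for x unfolding Fr_def by (rule finite_subset[of _ "{..j}"]) auto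
  have finP: "finite (PiE X (\<lambda>x. Pow (Fr x)))" using fin finF unfolding X_def by (intro finite_PiE) auto
  have "card (cand j L) \<le> card (PiE X (\<lambda>x. Pow (Fr x)))" by (rule card_inj_on_le[OF inj sub finP])
  also have "\<dots> = (\<Prod>x\<in>X. (2::nat) ^ card (Fr x))" using fin finF unfolding X_def by (simp add: card_PiE card_Pow)
  also have "\<dots> \<le> (\<Prod>x\<in>X. (4::nat))"
  proof (rule prod_mono)
    fix x assume "x \<in> X"
    have "card (Fr x) \<le> 2" unfolding Fr_def by (rule Fr_card[OF nest])
    then have "(2::nat) ^ card (Fr x) \<le> 2 ^ 2" by (intro power_increasing) auto
    then show "0 \<le> (2::nat) ^ card (Fr x) \<and> (2::nat) ^ card (Fr x) \<le> 4" by simp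
  qed
  also have "\<dots> = 4 ^ card X" by simp
  finally have "card (cand j L) \<le> 4 ^ card (L ! Suc j)" unfolding X_def .
  moreover have "finite (cand j L)" using inj sub finP by (metis finite_imageD finite_subset)
  ultimately show ?thesis by simp
qed

primrec cc :: "nat \<Rightarrow> nat \<Rightarrow> nat \<Rightarrow> nat" where
  "cc N s 0 = N"
| "cc N s (Suc j) = mm (cc N s j) (4^s)"

primrec colf :: "nat \<Rightarrow> nat \<Rightarrow> nat \<Rightarrow> nat set list \<Rightarrow> nat" where
  "colf N s 0 = (\<lambda>L. max 1 (min N (Min (L!0))))"
| "colf N s (Suc j) = (\<lambda>L. lin (cc N s j) (4^s) (colf N s j (take (Suc j) L)) (colf N s j ` cand j L))"

lemma cc_pos: "N \<ge> 1 \<Longrightarrow> cc N s j \<ge> 1"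
  by (induct j) (auto simp: mm_def Suc_le_eq)

lemma colf_range: "N \<ge> 1 \<Longrightarrow> colf N s j L \<in> {1..cc N s j}"
proof (induct j arbitrary: L)
  case 0 then show ?case by auto
next
  case (Suc j)
  show ?case using lin_range[OF cc_pos[OF Suc.prems]] by simp
qed

definition view :: "nat \<Rightarrow> nat set list \<Rightarrow> nat set list" where
  "view j A = map (\<lambda>i. A!(2*i)) [0..<Suc j]"

definition ColF :: "nat \<Rightarrow> nat \<Rightarrow> nat set list \<Rightarrow> nat" where
  "ColF N s P = colf N s (length P div 2) (view (length P div 2) P)"



lemma aux_ineq1: "s \<ge> 1 \<Longrightarrow> 12*(6*s+10) \<le> 64*(4::nat)^s"
proof (induct s rule: nat_induct_at_least)
  case base then show ?case by simp
next
  case (Suc n)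
  have "(4::nat)^n \<ge> 1" by simp
  then show ?case using Suc by simp
qed

lemma num_ineq: assumes "s \<ge> 1" shows "3*(4^s+1)^2*(6*s+10) \<le> (2::nat)^(6*s+6)"
proof -
  have a: "(4::nat)^s + 1 \<le> 2*4^s" by (simp add: Suc_le_eq)
  have "3*(4^s+1)^2*(6*s+10) \<le> 3*(2*4^s)^2*(6*s+10)"
    using a by (intro mult_right_mono mult_left_mono power_mono) auto
  also have "\<dots> = 16^s * (12*(6*s+10))" by (simp add: power2_eq_square power_mult_distrib[symmetric])
  also have "\<dots> \<le> 16^s * (64*4^s)" using aux_ineq1[OF assms] by (intro mult_left_mono) auto
  also have "\<dots> = 2^(6*s+6)"
  proof -
    have "(16::nat)^s * 4^s = 64^s" by (simp add: power_mult_distrib[symmetric])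
    moreover have "(2::nat)^(6*s+6) = 64 * 64^s" by (simp add: power_add power_mult)
    ultimately show ?thesis by simp
  qed
  finally show ?thesis .
qed

lemma iter_log_Suc: "iter_log (Suc k) x = log 2 (iter_log k x)"
  by (simp add: iter_log_def)

lemma cc_bound:
  assumes N: "N \<ge> 1" and s: "s \<ge> 1"
  shows "real (cc N s k) \<le> 2^(6*s+6) * max 1 (iter_log k (real N))"
proof (induct k)
  case 0 then show ?case using N by (simp add: iter_log_def)
next
  case (Suc k)
  define l where "l = max 1 (iter_log k (real N))"
  define c where "c = cc N s k"
  define K :: real where "K = real (3*(4^s+1)^2)"
  have l1: "l \<ge> 1" unfolding l_def by simp
  have c1: "c \<ge> 1" unfolding c_def using cc_pos[OF N] .
  have Kn: "K * (6*real s+10) \<le> 2^(6*s+6)"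
  proof -
    have "real (3*(4^s+1)^2*(6*s+10)) \<le> real ((2::nat)^(6*s+6))" using num_ineq[OF s] by (simp only: of_nat_le_iff)
    then show ?thesis unfolding K_def by simp
  qed
  have K0: "K \<ge> 0" unfolding K_def by simp
  have ih: "real c \<le> 2^(6*s+6) * l" using Suc unfolding c_def l_def .
  have "log 2 (real c) \<le> log 2 (2^(6*s+6) * l)" using ih c1 by (intro log_le_cancel_iff[THEN iffD2]) auto
  also have "\<dots> = real (6*s+6) + log 2 l" using l1 by (simp add: log_mult log_nat_power)
  finally have lc: "real (nlog c) \<le> real (6*s+7) + log 2 l" using nlog_le[OF c1] by simp
  have cS: "real (cc N s (Suc k)) = K * (real (nlog c) + 2)" unfolding K_def c_def by (simp add: mm_def algebra_simps)
  also have "\<dots> \<le> K * (6*real s + 9 + log 2 l)" using lc K0 by (intro mult_left_mono) auto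
  finally have st: "real (cc N s (Suc k)) \<le> K * (6*real s + 9 + log 2 l)" .
  show ?case
  proof (cases "l \<le> 2")
    case True
    then have "log 2 l \<le> 1" using l1 by (simp add: log_le_one_cancel_iff)
    then have "real (cc N s (Suc k)) \<le> K * (6*real s + 10)" using st K0
      by (smt (verit) mult_left_mono)
    also have "\<dots> \<le> 2^(6*s+6)" by (rule Kn)
    also have "\<dots> \<le> 2^(6*s+6) * max 1 (iter_log (Suc k) (real N))" by simp
    finally show ?thesis .
  next
    case False
    then have ll: "l = iter_log k (real N)" unfolding l_def by auto
    have lg: "log 2 l \<ge> 1" using False by simp
    have "6*real s + 9 + log 2 l \<le> (6*real s + 10) * log 2 l"
    proof -
      have "(6*real s + 9) * 1 \<le> (6*real s + 9) * log 2 l" using lg by (intro mult_left_mono) auto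
      then show ?thesis by (simp add: algebra_simps)
    qed
    then have "real (cc N s (Suc k)) \<le> K * ((6*real s + 10) * log 2 l)" using st K0
      by (smt (verit) mult_left_mono)
    also have "\<dots> = (K * (6*real s + 10)) * log 2 l" by simp
    also have "\<dots> \<le> 2^(6*s+6) * log 2 l" using Kn lg by (intro mult_right_mono) auto
    also have "log 2 l = iter_log (Suc k) (real N)" unfolding ll iter_log_Suc ..
    also have "2^(6*s+6) * iter_log (Suc k) (real N) \<le> 2^(6*s+6) * max 1 (iter_log (Suc k) (real N))" by simp
    finally show ?thesis .
  qed
qed



lemma chain_nest:
  assumes A: "A \<in> Chain N" and ab: "a \<le> b" and b: "b < length A"
  shows "A!a \<subseteq> A!b"
  using ab b
proof (induct b)
  case 0 then show ?case by simp
next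
  case (Suc b)
  show ?case
  proof (cases "a = Suc b")
    case True then show ?thesis by simp
  next
    case False
    then have "A!a \<subseteq> A!b" using Suc by simp
    also have "A!b \<subseteq> A!Suc b" using A Suc.prems unfolding Chain_def by auto
    finally show ?thesis .
  qed
qed

lemma chain_fin: "A \<in> Chain N \<Longrightarrow> i < length A \<Longrightarrow> finite (A!i)"
  unfolding Chain_def by (auto intro: finite_subset)

lemma chain_head: assumes "A \<in> Chain N" obtains w where "A!0 = {w}" "w \<in> {1..N}"
proof -
  have ne: "A \<noteq> []" and c: "card (A!0) = 1" and s: "A!0 \<subseteq> {1..N}" using assms unfolding Chain_def by auto
  from c obtain w where "A!0 = {w}" by (rule card_1_singletonE)
  then show ?thesis using s that by auto
qed

lemma chain_len: "A \<in> Chain N \<Longrightarrow> length A = Suc (lgt A)"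
  unfolding Chain_def lgt_def by auto

lemma close_up:
  assumes "within_dist 1 A B" "within_dist 1 A' B" "m + 2 \<le> lgt A"
  shows "A'!m \<subseteq> A!(m+2)"
proof -
  have lB: "lgt B + 1 = lgt A" "lgt B + 1 = lgt A'" using assms unfolding within_dist_def by auto
  have "m + 1 \<le> lgt B" using lB assms(3) by simp
  have w1: "\<forall>i\<le>lgt B. (if 1 \<le> i then A ! (i - 1) else {}) \<subseteq> B ! i \<and> B ! i \<subseteq> A ! (i + 1)"
    using assms(1) unfolding within_dist_def by simp
  have w2: "\<forall>i\<le>lgt B. (if 1 \<le> i then A' ! (i - 1) else {}) \<subseteq> B ! i \<and> B ! i \<subseteq> A' ! (i + 1)"
    using assms(2) unfolding within_dist_def by simp
  have "A'!m \<subseteq> B!(m+1)" using w2[rule_format, OF \<open>m + 1 \<le> lgt B\<close>] by simp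
  moreover have "B!(m+1) \<subseteq> A!(m+2)" using w1[rule_format, OF \<open>m + 1 \<le> lgt B\<close>] by (simp add: numeral_2_eq_2)
  ultimately show ?thesis by blast
qed

lemma view_nth: "i \<le> j \<Longrightarrow> view j A ! i = A!(2*i)"
  unfolding view_def by (simp del: upt_Suc)

lemma view_len: "length (view j A) = Suc j"
  unfolding view_def by simp

lemma view_take: "take (Suc j) (view (Suc j) A) = view j A"
  by (rule nth_equalityI) (auto simp: view_len view_nth)

lemma view_in_cand:
  assumes A: "A \<in> Chain N" and B: "within_dist 1 A B" "within_dist 1 A' B"
    and l: "lgt A = lgt A'" "2*Suc j \<le> lgt A"
  shows "view j A' \<in> cand j (view (Suc j) A)"
proof -
  have "(if i = 0 then {} else view (Suc j) A ! (i-1)) \<subseteq> view j A' ! i \<and>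
        view j A' ! i \<subseteq> view (Suc j) A ! Suc i" if i: "i \<le> j" for i
  proof
    have "A'!(2*i) \<subseteq> A!(2*i+2)" using close_up[OF B] l i by simp
    then show "view j A' ! i \<subseteq> view (Suc j) A ! Suc i" using i by (simp add: view_nth)
    show "(if i = 0 then {} else view (Suc j) A ! (i-1)) \<subseteq> view j A' ! i"
    proof (cases "i = 0")
      case False
      have "A!(2*(i-1)) \<subseteq> A'!(2*(i-1)+2)" using close_up[OF B(2,1)] l i False by simp
      moreover have "2*(i-1)+2 = 2*i" using False by simp
      ultimately show ?thesis using False i by (simp add: view_nth)
    qed simp
  qed
  then show ?thesis unfolding cand_def by (simp add: view_len)
qed

lemma card_le_sz:
  assumes A: "A \<in> Chain N" and i: "i < length A"
  shows "card (A!i) \<le> sz A"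
proof -
  have ne: "A \<noteq> []" using A unfolding Chain_def by auto
  have "last A = A!(length A - 1)" using ne by (simp add: last_conv_nth)
  moreover have "A!i \<subseteq> A!(length A - 1)" using chain_nest[OF A] i by auto
  moreover have "finite (A!(length A - 1))" using chain_fin[OF A] ne by simp
  ultimately show ?thesis unfolding sz_def by (simp add: card_mono)
qed

lemma cands_ok:
  assumes N: "N \<ge> 1" and A: "A \<in> Chain N" and l: "2*Suc j \<le> lgt A" and sz: "sz A \<le> s"
  shows "colf N s j ` cand j (view (Suc j) A) \<subseteq> {1..cc N s j} \<and>
         card (colf N s j ` cand j (view (Suc j) A)) \<le> 4^s \<and>
         finite (colf N s j ` cand j (view (Suc j) A))"
proof -
  let ?L = "view (Suc j) A"
  have len: "length A = Suc (lgt A)" by (rule chain_len[OF A])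
  have nest: "\<forall>a b. a \<le> b \<longrightarrow> b \<le> Suc j \<longrightarrow> ?L!a \<subseteq> ?L!b"
  proof (intro allI impI)
    fix a b :: nat assume "a \<le> b" "b \<le> Suc j"
    then show "?L!a \<subseteq> ?L!b" using chain_nest[OF A, of "2*a" "2*b"] l len by (simp add: view_nth)
  qed
  have Lj: "?L ! Suc j = A!(2*Suc j)" by (simp add: view_nth)
  have fin: "finite (?L ! Suc j)" unfolding Lj using chain_fin[OF A] l len by simp
  have cardL: "card (?L ! Suc j) \<le> s" unfolding Lj using card_le_sz[OF A, of "2*Suc j"] l len sz by linarith
  from cand_count[OF nest fin] have cc: "finite (cand j ?L)" "card (cand j ?L) \<le> 4 ^ card (?L ! Suc j)" by auto
  have "card (colf N s j ` cand j ?L) \<le> card (cand j ?L)" using cc(1) by (rule card_image_le)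
  also have "\<dots> \<le> 4 ^ card (?L ! Suc j)" by (rule cc(2))
  also have "\<dots> \<le> 4 ^ s" using cardL by (intro power_increasing) auto
  finally show ?thesis using colf_range[OF N] cc(1) by auto
qed

lemma main_sep:
  assumes N: "N \<ge> 1"
  shows "\<forall>A A'. A \<in> Chain N \<longrightarrow> A' \<in> Chain N \<longrightarrow> lgt A = lgt A' \<longrightarrow> 2*j \<le> lgt A \<longrightarrow>
     sz A \<le> s \<longrightarrow> sz A' \<le> s \<longrightarrow> within_dist 1 A B \<longrightarrow> within_dist 1 A' B \<longrightarrow> A!0 \<noteq> A'!0 \<longrightarrow>
     colf N s j (view j A) \<noteq> colf N s j (view j A')"
proof (induct j)
  case 0
  show ?case
  proof (intro allI impI)
    fix A A' assume A: "A \<in> Chain N" and A': "A' \<in> Chain N" and ne: "A!0 \<noteq> A'!0"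
    obtain w where w: "A!0 = {w}" "w \<in> {1..N}" using chain_head[OF A] .
    obtain w' where w': "A'!0 = {w'}" "w' \<in> {1..N}" using chain_head[OF A'] .
    show "colf N s 0 (view 0 A) \<noteq> colf N s 0 (view 0 A')"
      using w w' ne by (simp add: view_nth)
  qed
next
  case (Suc j)
  show ?case
  proof (intro allI impI)
    fix A A' assume A: "A \<in> Chain N" and A': "A' \<in> Chain N" and l: "lgt A = lgt A'"
      and l2: "2*Suc j \<le> lgt A" and sA: "sz A \<le> s" and sA': "sz A' \<le> s"
      and B: "within_dist 1 A B" and B': "within_dist 1 A' B" and ne: "A!0 \<noteq> A'!0"
    have ih: "colf N s j (view j A) \<noteq> colf N s j (view j A')"
      using Suc[rule_format, OF A A' l _ sA sA' B B' ne] l2 by simp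
    have c1: "cc N s j \<ge> 1" by (rule cc_pos[OF N])
    have ok: "colf N s j ` cand j (view (Suc j) A) \<subseteq> {1..cc N s j} \<and>
         card (colf N s j ` cand j (view (Suc j) A)) \<le> 4^s \<and>
         finite (colf N s j ` cand j (view (Suc j) A))"
      by (rule cands_ok[OF N A l2 sA])
    have ok': "colf N s j ` cand j (view (Suc j) A') \<subseteq> {1..cc N s j} \<and>
         card (colf N s j ` cand j (view (Suc j) A')) \<le> 4^s \<and>
         finite (colf N s j ` cand j (view (Suc j) A'))"
      by (rule cands_ok[OF N A' _ sA']) (use l l2 in simp)
    have mem: "colf N s j (view j A') \<in> colf N s j ` cand j (view (Suc j) A)"
      using view_in_cand[OF A B B' l l2] by blast
    show "colf N s (Suc j) (view (Suc j) A) \<noteq> colf N s (Suc j) (view (Suc j) A')"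
      unfolding colf.simps view_take
      by (rule lin_distinct[OF c1 colf_range[OF N] _ _ _ colf_range[OF N]])
         (use ok ok' ih mem in auto)
  qed
qed

lemma prefix_facts:
  assumes A: "A \<in> Chain N" and l: "2*k \<le> lgt A"
  shows "length (prefix A (2*k)) div 2 = k" "view k (prefix A (2*k)) = view k A"
    "sz (prefix A (2*k)) = card (A!(2*k))"
proof -
  have len: "length A = Suc (lgt A)" by (rule chain_len[OF A])
  have lp: "length (prefix A (2*k)) = Suc (2*k)" unfolding prefix_def using len l by simp
  then show "length (prefix A (2*k)) div 2 = k" by simp
  show "view k (prefix A (2*k)) = view k A"
    by (rule nth_equalityI) (auto simp: view_len view_nth prefix_def)
  have "prefix A (2*k) \<noteq> []" using lp by auto
  then have "last (prefix A (2*k)) = prefix A (2*k) ! (length (prefix A (2*k)) - 1)" by (rule last_conv_nth)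
  also have "\<dots> = prefix A (2*k) ! (2*k)" using lp by simp
  also have "\<dots> = A!(2*k)" unfolding prefix_def by simp
  finally show "sz (prefix A (2*k)) = card (A!(2*k))" unfolding sz_def by simp
qed

theorem mainTheorem11:
  fixes N :: nat
  assumes "N \<ge> 1"
  shows "\<exists>Col :: nat \<Rightarrow> nat set list \<Rightarrow> nat.
    (\<forall>s\<ge>1. \<forall>A\<in>Chain N. Col s A \<ge> 1) \<and>
    (\<forall>k::nat. iter_log k (real N) \<ge> 1 \<longrightarrow>
      (\<forall>A\<in>Chain N. lgt A \<ge> 2 * k \<longrightarrow>
         (\<forall>s\<ge>sz (prefix A (2 * k)).
            real (Col s (prefix A (2 * k))) \<le> 2 ^ (6 * (s + 1)) * iter_log k (real N))) \<and>
      (\<forall>A\<in>Chain N. \<forall>A'\<in>Chain N. \<forall>s.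
         lgt A = lgt A' \<and> lgt A \<ge> 2 * k \<and> sz A \<le> s \<and> sz A' \<le> s \<and>
         S N 1 A \<inter> S N 1 A' \<noteq> {} \<and> A ! 0 \<noteq> A' ! 0 \<longrightarrow>
         Col s (prefix A (2 * k)) \<noteq> Col s (prefix A' (2 * k))))"
proof (intro exI[of _ "ColF N"] conjI allI impI ballI)
  fix s A assume "A \<in> Chain N"
  show "1 \<le> ColF N s A" unfolding ColF_def using colf_range[OF assms] by simp
next
  fix k s A
  assume lk: "1 \<le> iter_log k (real N)" and A: "A \<in> Chain N" and l: "2*k \<le> lgt A"
    and s: "sz (prefix A (2*k)) \<le> s"
  note pf = prefix_facts[OF A l]
  obtain w where w: "A!0 = {w}" "w \<in> {1..N}" using chain_head[OF A] .
  have len: "length A = Suc (lgt A)" by (rule chain_len[OF A])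
  have "A!0 \<subseteq> A!(2*k)" using chain_nest[OF A, of 0 "2*k"] len l by simp
  moreover have "finite (A!(2*k))" using chain_fin[OF A] len l by simp
  ultimately have "card (A!0) \<le> card (A!(2*k))" by (rule card_mono[rotated])
  then have s1: "s \<ge> 1" using s pf(3) w by simp
  have "real (ColF N s (prefix A (2*k))) = real (colf N s k (view k A))"
    unfolding ColF_def pf(1) pf(2) ..
  also have "\<dots> \<le> real (cc N s k)" using colf_range[OF assms] by simp
  also have "\<dots> \<le> 2^(6*s+6) * max 1 (iter_log k (real N))" by (rule cc_bound[OF assms s1])
  also have "\<dots> = 2 ^ (6 * (s + 1)) * iter_log k (real N)" using lk by (simp add: max_def)
  finally show "real (ColF N s (prefix A (2 * k))) \<le> 2 ^ (6 * (s + 1)) * iter_log k (real N)" .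
next
  fix k s A A'
  assume A: "A \<in> Chain N" and A': "A' \<in> Chain N"
    and h: "lgt A = lgt A' \<and> 2 * k \<le> lgt A \<and> sz A \<le> s \<and> sz A' \<le> s \<and>
         S N 1 A \<inter> S N 1 A' \<noteq> {} \<and> A ! 0 \<noteq> A' ! 0"
  obtain B where B: "within_dist 1 A B" "within_dist 1 A' B" using h unfolding S_def by auto
  have l': "2*k \<le> lgt A'" using h by simp
  have "colf N s k (view k A) \<noteq> colf N s k (view k A')"
    using main_sep[OF assms, of k s B] A A' h B by blast
  then show "ColF N s (prefix A (2 * k)) \<noteq> ColF N s (prefix A' (2 * k))"
    unfolding ColF_def prefix_facts[OF A] prefix_facts[OF A' l'] using h by (simp add: prefix_facts[OF A])
qed


end
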